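(* Let $\mu\in\mathbb{R}$ and $\sigma>0$, and let $\mathcal{L}(\mu,\sigma)$ be the set of probability distributions $F$ on $\mathbb{R}$ with $\mathbb{E}^F[X]=\mu$ and $\mathbb{E}^F[X^2]=\mu^2+\sigma^2$. For any $F\in\mathcal{L}(\mu,\sigma)$ there exists a two-point distribution $F^*\in\mathcal{L}(\mu,\sigma)$ whose support is contained in $[\mathrm{ess\mbox{-}inf}\,F,\ \mathrm{ess\mbox{-}sup}\,F]$. Moreover, if $F$ is symmetric, then such a two-point distribution $F^*$ can be chosen to be symmetric.
   Context: A two-point distribution is the law of a random variable $X$ with $\mathbb{P}(X=x_1)=p_1$, $\mathbb{P}(X=x_2)=p_2$, where $0\le p_i<1$ and $p_1+p_2=1$. $\mathrm{ess\mbox{-}inf}\,F$ and $\mathrm{ess\mbox{-}sup}\,F$ are the essential infimum and supremum of a random variable with distribution $F$ (possibly $\mp\infty$). A distribution of $X$ is symmetric if there is $a\in\mathbb{R}$ with $\mathbb{P}(X-a>x)=\mathbb{P}(X-a<-x)$ for all $x\in\mathbb{R}$. *)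

theory Defs
  imports "HOL-Probability.Probability"
begin

definition real_dist :: "real measure \<Rightarrow> bool" where
  "real_dist M \<longleftrightarrow> prob_space M \<and> sets M = sets borel"

definition L_class :: "real \<Rightarrow> real \<Rightarrow> real measure \<Rightarrow> bool" where
  "L_class \<mu> \<sigma> M \<longleftrightarrow> real_dist M \<and>
     integrable M (\<lambda>x. x) \<and> integrable M (\<lambda>x. x ^ 2) \<and>
     (\<integral>x. x \<partial>M) = \<mu> \<and> (\<integral>x. x ^ 2 \<partial>M) = \<mu> ^ 2 + \<sigma> ^ 2"

definition ess_sup_dist :: "real measure \<Rightarrow> ereal" where
  "ess_sup_dist M = esssup M (\<lambda>x. ereal x)"

definition ess_inf_dist :: "real measure \<Rightarrow> ereal" where
  "ess_inf_dist M = - esssup M (\<lambda>x. - ereal x)"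

definition two_point_on :: "real measure \<Rightarrow> real \<Rightarrow> real \<Rightarrow> bool" where
  "two_point_on M x1 x2 \<longleftrightarrow> real_dist M \<and> x1 \<noteq> x2 \<and>
     (\<exists>p1 p2. 0 \<le> p1 \<and> p1 < 1 \<and> 0 \<le> p2 \<and> p2 < 1 \<and> p1 + p2 = 1 \<and>
        measure M {x1} = p1 \<and> measure M {x2} = p2)"

definition symmetric_dist :: "real measure \<Rightarrow> bool" where
  "symmetric_dist M \<longleftrightarrow> (\<exists>a. \<forall>x. measure M {y. y - a > x} = measure M {y. y - a < - x})"

end

theory Submission
  imports Defs
begin

lemma bern_meas:
  assumes "0 \<le> q" "q \<le> 1"
  shows "measure (measure_pmf (bernoulli_pmf q)) S = (if True \<in> S then q else 0) + (if False \<in> S then 1 - q else 0)"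
proof -
  have "measure (measure_pmf (bernoulli_pmf q)) S = sum (pmf (bernoulli_pmf q)) S"
    by (rule measure_measure_pmf_finite) simp
  also have "S = {} \<or> S = {True} \<or> S = {False} \<or> S = UNIV"
    by (metis (full_types) UNIV_eq_I insertI1 subset_singletonD subsetI)
  then have "sum (pmf (bernoulli_pmf q)) S = (if True \<in> S then q else 0) + (if False \<in> S then 1 - q else 0)"
    using assms by (auto simp: UNIV_bool)
  finally show ?thesis .
qed

lemma two_point:
  fixes x1 x2 \<mu> \<sigma> :: real
  assumes "x1 < \<mu>" "\<mu> < x2" "(x2 - \<mu>) * (\<mu> - x1) = \<sigma>^2"
  shows "\<exists>G. two_point_on G x1 x2 \<and> L_class \<mu> \<sigma> G \<and> (x2 - \<mu> = \<mu> - x1 \<longrightarrow> symmetric_dist G)"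
proof -
  define q where "q = (\<mu> - x1) / (x2 - x1)"
  have q: "0 < q" "q < 1" using assms by (auto simp: q_def field_simps)
  define g where "g = (\<lambda>b::bool. if b then x2 else x1)"
  define G where "G = distr (measure_pmf (bernoulli_pmf q)) borel g"
  have gm: "g \<in> measure_pmf (bernoulli_pmf q) \<rightarrow>\<^sub>M borel" by simp
  have rd: "real_dist G" unfolding real_dist_def G_def
    by (auto intro!: measure_pmf.prob_space_distr)
  have int: "integrable G f" if "f \<in> borel_measurable borel" for f :: "real \<Rightarrow> real"
    unfolding G_def using that
    by (subst integrable_distr_eq) (auto intro!: integrable_measure_pmf_finite)
  have ig: "(\<integral>x. f x \<partial>G) = f x2 * q + f x1 * (1 - q)" if "f \<in> borel_measurable borel" for f :: "real \<Rightarrow> real"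
    unfolding G_def using that q by (subst integral_distr) (auto simp: g_def)
  have mG: "measure G S = (if True \<in> g -` S then q else 0) + (if False \<in> g -` S then 1 - q else 0)" if "S \<in> sets borel" for S
    unfolding G_def using that q by (subst measure_distr) (auto simp: bern_meas)
  have tp: "two_point_on G x1 x2"
    unfolding two_point_on_def using rd assms q
    by (intro conjI exI[of _ "1-q"] exI[of _ q]) (auto simp: mG g_def)
  have qd: "q * (x2 - x1) = \<mu> - x1" using assms by (simp add: q_def)
  have m1: "(\<integral>x. x \<partial>G) = \<mu>"
  proof -
    have "x2 * q + x1 * (1 - q) = x1 + q * (x2 - x1)" by (simp add: algebra_simps)
    then show ?thesis using ig[of "\<lambda>x. x"] qd by simp
  qed
  have m2: "(\<integral>x. x^2 \<partial>G) = \<mu>^2 + \<sigma>^2"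
  proof -
    have "x2^2 * q + x1^2 * (1 - q) = x1^2 + (q * (x2 - x1)) * (x2 + x1)" by (simp add: algebra_simps power2_eq_square)
    also have "\<dots> = \<mu>^2 + \<sigma>^2" unfolding qd assms(3)[symmetric] by (simp add: algebra_simps power2_eq_square)
    finally show ?thesis using ig[of "\<lambda>x. x^2"] by simp
  qed
  have L: "L_class \<mu> \<sigma> G" unfolding L_class_def using rd m1 m2 by (simp add: int)
  have "symmetric_dist G" if e: "x2 - \<mu> = \<mu> - x1"
  proof -
    have qh: "q = 1/2" using e assms by (simp add: q_def field_simps)
    show ?thesis unfolding symmetric_dist_def
    proof (intro exI[of _ \<mu>] allI)
      fix x
      show "measure G {y. y - \<mu> > x} = measure G {y. y - \<mu> < - x}"
        using e qh by (subst (1 2) mG) (auto simp: g_def)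
    qed
  qed
  then show ?thesis using tp L by blast
qed

lemma L_basic:
  assumes "L_class \<mu> \<sigma> F"
  shows "prob_space F" "sets F = sets borel" "space F = UNIV"
    "integrable F (\<lambda>x. x)" "integrable F (\<lambda>x. x^2)"
    "(\<integral>x. x \<partial>F) = \<mu>" "(\<integral>x. x ^ 2 \<partial>F) = \<mu> ^ 2 + \<sigma> ^ 2"
  using assms unfolding L_class_def real_dist_def
  by (auto dest: sets_eq_imp_space_eq)

lemma BD:
  fixes l u :: real
  assumes L: "L_class \<mu> \<sigma> F" and AE: "AE x in F. l \<le> x \<and> x \<le> u"
  shows "\<sigma>^2 \<le> (u - \<mu>) * (\<mu> - l)"
proof -
  note B = L_basic[OF L]
  interpret prob_space F by (rule B(1))
  have P1: "prob UNIV = 1" using B(3) prob_space by simp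
  have "AE x in F. 0 \<le> (u + l) * x - u * l - x^2" using AE
  proof eventually_elim
    fix x assume "l \<le> x \<and> x \<le> u"
    then have "0 \<le> (u - x) * (x - l)" by simp
    then show "0 \<le> (u + l) * x - u * l - x^2" by (simp add: algebra_simps power2_eq_square)
  qed
  then have "0 \<le> (\<integral>x. (u + l) * x - u * l - x^2 \<partial>F)" by (rule integral_nonneg_AE)
  also have "(\<integral>x. (u + l) * x - u * l - x^2 \<partial>F) = (u + l) * \<mu> - u * l - (\<mu>^2 + \<sigma>^2)"
    using B P1 by (simp add: integral_diff integral_mult_right)
  finally show ?thesis by (simp add: algebra_simps power2_eq_square)
qed

lemma strict_lower:
  fixes l :: real
  assumes L: "L_class \<mu> \<sigma> F" and s: "\<sigma> > 0" and AE: "AE x in F. l \<le> x"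
  shows "l < \<mu>"
proof (rule ccontr)
  assume "\<not> l < \<mu>"
  note B = L_basic[OF L]
  interpret prob_space F by (rule B(1))
  have P1: "prob UNIV = 1" using B(3) prob_space by simp
  have i0: "(\<integral>x. x - l \<partial>F) = \<mu> - l" using B P1 by (simp add: integral_diff)
  have AE0: "AE x in F. 0 \<le> x - l" using AE by (auto elim: eventually_mono)
  have int0: "integrable F (\<lambda>x. x - l)" using B P1 by auto
  have "\<mu> - l \<ge> 0" using i0 integral_nonneg_AE[OF AE0] by simp
  then have "(\<integral>x. x - l \<partial>F) = 0" using i0 \<open>\<not> l < \<mu>\<close> by simp
  then have "AE x in F. x - l = 0"
    using integral_nonneg_eq_0_iff_AE[OF int0 AE0] by simp
  then have "AE x in F. x^2 = l^2" by eventually_elim (simp add: algebra_simps)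
  then have "(\<integral>x. x^2 \<partial>F) = (\<integral>x. l^2 \<partial>F)" by (rule integral_cong_AE[OF borel_measurable_integrable[OF B(5)] borel_measurable_const])
  then have "\<mu>^2 + \<sigma>^2 = l^2" using B P1 by simp
  moreover have "\<mu> = l" using \<open>\<mu> - l \<ge> 0\<close> \<open>\<not> l < \<mu>\<close> by simp
  ultimately show False using s by simp
qed

lemma strict_upper:
  fixes u :: real
  assumes L: "L_class \<mu> \<sigma> F" and s: "\<sigma> > 0" and AE: "AE x in F. x \<le> u"
  shows "\<mu> < u"
proof (rule ccontr)
  assume "\<not> \<mu> < u"
  note B = L_basic[OF L]
  interpret prob_space F by (rule B(1))
  have P1: "prob UNIV = 1" using B(3) prob_space by simp
  have i0: "(\<integral>x. u - x \<partial>F) = u - \<mu>" using B P1 by (simp add: integral_diff)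
  have AE0: "AE x in F. 0 \<le> u - x" using AE by (auto elim: eventually_mono)
  have int0: "integrable F (\<lambda>x. u - x)" using B P1 by auto
  have "u - \<mu> \<ge> 0" using i0 integral_nonneg_AE[OF AE0] by simp
  then have "(\<integral>x. u - x \<partial>F) = 0" using i0 \<open>\<not> \<mu> < u\<close> by simp
  then have "AE x in F. u - x = 0"
    using integral_nonneg_eq_0_iff_AE[OF int0 AE0] by simp
  then have "AE x in F. x^2 = u^2" by eventually_elim (simp add: algebra_simps)
  then have "(\<integral>x. x^2 \<partial>F) = (\<integral>x. u^2 \<partial>F)" by (rule integral_cong_AE[OF borel_measurable_integrable[OF B(5)] borel_measurable_const])
  then have "\<mu>^2 + \<sigma>^2 = u^2" using B P1 by simp
  moreover have "\<mu> = u" using \<open>u - \<mu> \<ge> 0\<close> \<open>\<not> \<mu> < u\<close> by simp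
  ultimately show False using s by simp
qed


lemma AE_iff_meas0:
  assumes L: "L_class \<mu> \<sigma> F" and S: "{x. \<not> P x} \<in> sets borel"
  shows "(AE x in F. P x) \<longleftrightarrow> measure F {x. \<not> P x} = 0"
proof -
  note B = L_basic[OF L]
  interpret prob_space F by (rule B(1))
  have "(AE x in F. P x) \<longleftrightarrow> emeasure F {x. \<not> P x} = 0"
    by (rule AE_iff_measurable) (use B S in auto)
  also have "\<dots> \<longleftrightarrow> measure F {x. \<not> P x} = 0"
    by (simp add: emeasure_eq_measure)
  finally show ?thesis .
qed

lemma sym_center:
  assumes L: "L_class \<mu> \<sigma> F" and sym: "symmetric_dist F"
  shows "\<forall>x. measure F {y. y - \<mu> > x} = measure F {y. y - \<mu> < - x}"
proof -
  note B = L_basic[OF L]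
  interpret prob_space F by (rule B(1))
  have P1: "prob UNIV = 1" using B(3) prob_space by simp
  obtain c where symc: "\<And>x. measure F {y. y - c > x} = measure F {y. y - c < - x}"
    using sym unfolding symmetric_dist_def by blast
  define r where "r = (\<lambda>y::real. 2 * c - y)"
  define M2 where "M2 = distr F borel r"
  have rm: "r \<in> borel_measurable F"
    by (subst measurable_cong_sets[OF B(2) refl]) (simp add: r_def)
  have rd1: "real_distribution F"
    unfolding real_distribution_def real_distribution_axioms_def using B by auto
  have rd2: "real_distribution M2"
    unfolding real_distribution_def real_distribution_axioms_def M2_def
    using prob_space_distr[OF rm] by auto
  have "cdf F = cdf M2"
  proof
    fix t
    have e1: "{y. y - c > t - c} = {t<..}" by auto
    have e2: "{y. y - c < - (t - c)} = {..<2*c - t}" by auto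
    have s: "measure F {t<..} = measure F {..<2*c - t}" using symc[of "t - c"] unfolding e1 e2 .
    have "measure F {..t} = measure F (UNIV - {t<..})" by (rule arg_cong[where f="measure F"]) auto
    also have "\<dots> = 1 - measure F {t<..}" using prob_compl[of "{t<..}"] B by simp
    also have "\<dots> = 1 - measure F {..<2*c - t}" using s by simp
    also have "\<dots> = measure F (UNIV - {..<2*c - t})" using prob_compl[of "{..<2*c - t}"] B by simp
    also have "UNIV - {..<2*c - t} = r -` {..t} \<inter> space F" using B by (auto simp: r_def)
    also have "measure F \<dots> = measure M2 {..t}"
      unfolding M2_def by (subst measure_distr) (use rm in auto)
    finally show "cdf F t = cdf M2 t" by (simp add: cdf_def)
  qed
  then have FM: "F = M2" by (rule cdf_unique[OF rd1 rd2])
  have "\<mu> = (\<integral>x. x \<partial>M2)" using B(6) FM by simp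
  also have "\<dots> = (\<integral>x. 2 * c - x \<partial>F)" unfolding M2_def
    by (subst integral_distr) (use rm in \<open>auto simp: r_def\<close>)
  also have "\<dots> = 2 * c - \<mu>" using B P1 by (simp add: integral_diff)
  finally have "c = \<mu>" by simp
  then show ?thesis using symc by blast
qed


theorem lemma1:
  fixes \<mu> \<sigma> :: real and F :: "real measure"
  assumes "\<sigma> > 0" and "L_class \<mu> \<sigma> F"
  shows "\<exists>G x1 x2. two_point_on G x1 x2 \<and> L_class \<mu> \<sigma> G \<and>
            ess_inf_dist F \<le> ereal x1 \<and> ereal x1 \<le> ess_sup_dist F \<and>
            ess_inf_dist F \<le> ereal x2 \<and> ereal x2 \<le> ess_sup_dist F \<and>
            (symmetric_dist F \<longrightarrow> symmetric_dist G)"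
proof -
  note L = assms(2) and s = assms(1)
  note B = L_basic[OF L]
  interpret prob_space F by (rule B(1))
  define a where "a = ess_inf_dist F"
  define b where "b = ess_sup_dist F"
  have AEa: "AE x in F. a \<le> ereal x"
    using esssup_AE[of "\<lambda>x. - ereal x" F] unfolding a_def ess_inf_dist_def
    by eventually_elim (simp add: ereal_uminus_le_reorder)
  have AEb: "AE x in F. ereal x \<le> b"
    using esssup_AE[of "\<lambda>x. ereal x" F] unfolding b_def ess_sup_dist_def by simp
  have noF: "\<not> (AE x in F. False)" by (simp add: AE_False)
  have a_ninf: "a \<noteq> \<infinity>"
  proof
    assume "a = \<infinity>" then have "AE x in F. False" using AEa by simp
    then show False using noF by simp
  qed
  have b_ninf: "b \<noteq> -\<infinity>"
  proof
    assume "b = -\<infinity>" then have "AE x in F. False" using AEb by simp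
    then show False using noF by simp
  qed
  have AEl: "AE x in F. l \<le> x" if "a = ereal l" for l using AEa that by simp
  have AEu: "AE x in F. x \<le> u" if "b = ereal u" for u using AEb that by simp
  have symA: "a \<le> ereal (\<mu> - \<sigma>) \<and> ereal (\<mu> + \<sigma>) \<le> b" if sym: "symmetric_dist F"
  proof
    note sc = sym_center[OF L sym]
    show "a \<le> ereal (\<mu> - \<sigma>)"
    proof (cases a)
      case (real l)
      have A1: "AE x in F. l \<le> x" using AEl[OF real] .
      have "measure F {x. \<not> l \<le> x} = 0" using A1 AE_iff_meas0[OF L, of "\<lambda>x. l \<le> x"] by simp
      moreover have "{x. \<not> l \<le> x} = {y. y - \<mu> < - (\<mu> - l)}" by auto
      ultimately have "measure F {y. y - \<mu> > \<mu> - l} = 0" using sc by metis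
      moreover have "{y. y - \<mu> > \<mu> - l} = {x. \<not> x \<le> 2 * \<mu> - l}" by auto
      ultimately have A2: "AE x in F. x \<le> 2 * \<mu> - l" using AE_iff_meas0[OF L, of "\<lambda>x. x \<le> 2 * \<mu> - l"] by simp
      have "AE x in F. l \<le> x \<and> x \<le> 2 * \<mu> - l" using A1 A2 by eventually_elim simp
      from BD[OF L this] have "\<sigma>^2 \<le> (\<mu> - l)^2" by (simp add: power2_eq_square)
      moreover have "l < \<mu>" by (rule strict_lower[OF L s A1])
      ultimately have "\<sigma> \<le> \<mu> - l" using power2_le_imp_le[of \<sigma> "\<mu> - l"] by linarith
      then show ?thesis using real by simp
    qed (use a_ninf in auto)
    show "ereal (\<mu> + \<sigma>) \<le> b"
    proof (cases b)
      case (real u)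
      have A1: "AE x in F. x \<le> u" using AEu[OF real] .
      have "measure F {x. \<not> x \<le> u} = 0" using A1 AE_iff_meas0[OF L, of "\<lambda>x. x \<le> u"] by simp
      moreover have "{x. \<not> x \<le> u} = {y. y - \<mu> > u - \<mu>}" by auto
      ultimately have "measure F {y. y - \<mu> < - (u - \<mu>)} = 0" using sc by metis
      moreover have "{y. y - \<mu> < - (u - \<mu>)} = {x. \<not> 2 * \<mu> - u \<le> x}" by auto
      ultimately have A2: "AE x in F. 2 * \<mu> - u \<le> x" using AE_iff_meas0[OF L, of "\<lambda>x. 2 * \<mu> - u \<le> x"] by simp
      have "AE x in F. 2 * \<mu> - u \<le> x \<and> x \<le> u" using A1 A2 by eventually_elim simp
      from BD[OF L this] have "\<sigma>^2 \<le> (u - \<mu>)^2" by (simp add: power2_eq_square)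
      moreover have "\<mu> < u" by (rule strict_upper[OF L s A1])
      ultimately have "\<sigma> \<le> u - \<mu>" using power2_le_imp_le[of \<sigma> "u - \<mu>"] by linarith
      then show ?thesis using real by simp
    qed (use b_ninf in auto)
  qed
  show ?thesis
  proof (cases "a \<le> ereal (\<mu> - \<sigma>) \<and> ereal (\<mu> + \<sigma>) \<le> b")
    case True
    obtain G where G: "two_point_on G (\<mu> - \<sigma>) (\<mu> + \<sigma>)" "L_class \<mu> \<sigma> G" "symmetric_dist G"
      using two_point[of "\<mu> - \<sigma>" \<mu> "\<mu> + \<sigma>" \<sigma>] s by (auto simp: power2_eq_square)
    have le: "ereal (\<mu> - \<sigma>) \<le> ereal (\<mu> + \<sigma>)" using s by simp
    have "a \<le> ereal (\<mu> - \<sigma>)" "ereal (\<mu> + \<sigma>) \<le> b" using True by auto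
    moreover have "a \<le> ereal (\<mu> + \<sigma>)" "ereal (\<mu> - \<sigma>) \<le> b"
      using True le order_trans by blast+
    ultimately show ?thesis using G unfolding a_def b_def by blast
  next
    case False
    then have nsym: "\<not> symmetric_dist F" using symA by blast
    show ?thesis
    proof (cases "a \<le> ereal (\<mu> - \<sigma>)")
      case False
      then obtain l where al: "a = ereal l" using a_ninf by (cases a) auto
      have A1: "AE x in F. l \<le> x" using AEl[OF al] .
      have lm: "l < \<mu>" by (rule strict_lower[OF L s A1])
      define x2 where "x2 = \<mu> + \<sigma>^2 / (\<mu> - l)"
      have x2m: "\<mu> < x2" using lm s by (simp add: x2_def)
      have eq: "(x2 - \<mu>) * (\<mu> - l) = \<sigma>^2" using lm by (simp add: x2_def)
      obtain G where G: "two_point_on G l x2" "L_class \<mu> \<sigma> G"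
        using two_point[OF lm x2m eq] by blast
      have x2b: "ereal x2 \<le> b"
      proof (cases b)
        case (real u)
        have "AE x in F. l \<le> x \<and> x \<le> u" using A1 AEu[OF real] by eventually_elim simp
        from BD[OF L this] have "\<sigma>^2 / (\<mu> - l) \<le> u - \<mu>" using lm by (simp add: pos_divide_le_eq)
        then show ?thesis using real by (simp add: x2_def)
      qed (use b_ninf in auto)
      have le: "ereal l \<le> ereal x2" using lm x2m by simp
      have "a \<le> ereal l" "ereal x2 \<le> b" using al x2b by auto
      moreover have "a \<le> ereal x2" using al le by simp
      moreover have "ereal l \<le> b" using order_trans[OF le x2b] .
      ultimately show ?thesis using G nsym unfolding a_def b_def by blast
    next
      case True
      with False have "\<not> ereal (\<mu> + \<sigma>) \<le> b" by blast
      then obtain u where bu: "b = ereal u" using b_ninf by (cases b) auto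
      have A1: "AE x in F. x \<le> u" using AEu[OF bu] .
      have um: "\<mu> < u" by (rule strict_upper[OF L s A1])
      define x1 where "x1 = \<mu> - \<sigma>^2 / (u - \<mu>)"
      have x1m: "x1 < \<mu>" using um s by (simp add: x1_def)
      have eq: "(u - \<mu>) * (\<mu> - x1) = \<sigma>^2" using um by (simp add: x1_def)
      obtain G where G: "two_point_on G x1 u" "L_class \<mu> \<sigma> G"
        using two_point[OF x1m um eq] by blast
      have x1a: "a \<le> ereal x1"
      proof (cases a)
        case (real l)
        have "AE x in F. l \<le> x \<and> x \<le> u" using AEl[OF real] A1 by eventually_elim simp
        from BD[OF L this] have "\<sigma>^2 / (u - \<mu>) \<le> \<mu> - l" using um by (simp add: pos_divide_le_eq mult.commute)
        then show ?thesis using real by (simp add: x1_def)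
      qed (use a_ninf in auto)
      have le: "ereal x1 \<le> ereal u" using um x1m by simp
      have "a \<le> ereal x1" "ereal u \<le> b" using x1a bu by auto
      moreover have "a \<le> ereal u" using order_trans[OF x1a le] .
      moreover have "ereal x1 \<le> b" using bu le by simp
      ultimately show ?thesis using G nsym unfolding a_def b_def by blast
    qed
  qed
qed

end
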